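(* (a) Assume $\lambda$, $w_1(r)$, $w_2(r)$ are nonnegative and $0\le\alpha\le\frac12[b\lambda+w_1(r)+w_2(r)]$. Then $\widetilde{\mathrm{ET}}_\lambda^\alpha$ is a negative definite kernel on ${\mathcal M}({\mathcal T})$. (b) Assume $\lambda$, $w_1(r)$, $w_2(r)$ are nonnegative and $0\le\alpha<\frac{b\lambda}{2}+\min\{w_1(r),w_2(r)\}$, and let $d_\alpha(\mu,\nu):=\widetilde{\mathrm{ET}}_\lambda^\alpha(\mu,\nu)+\frac{b\lambda}{2}[\mu({\mathcal T})+\nu({\mathcal T})]$. Then $d_\alpha$ is a negative definite kernel on ${\mathcal M}({\mathcal T})$.
   Context: Let ${\mathcal T}$ be a tree rooted at node $r$ with nonnegative edge lengths, identified with the set of its nodes and all points on its edges; $[x,y]$ is the unique path between $x,y$, $d_{\mathcal T}(x,y)$ its length, and $\omega$ the Borel length measure with $\omega([x,y])=d_{\mathcal T}(x,y)$. ${\mathcal M}({\mathcal T})$ is the set of nonnegative Borel measures on ${\mathcal T}$ with finite mass; $L^\infty({\mathcal T})$ is the space of Borel functions bounded $\omega$-a.e. with $\omega$-essential-sup norm. Fix $b\ge0$ and weights $w_1,w_2:{\mathcal T}\to[0,\infty)$. For $0\le\alpha\le\frac12[b\lambda+w_1(r)+w_2(r)]$, $\mathbb{L}_\alpha$ is the set of functions $f(x)=s+\int_{[r,x]}g\,d\omega$ with $s\in[-w_2(r)-\frac{b\lambda}{2}+\alpha,\ w_1(r)+\frac{b\lambda}{2}-\alpha]$ and $\|g\|_{L^\infty({\mathcal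 T})}\le b$, and $\widetilde{\mathrm{ET}}_\lambda^\alpha(\mu,\nu):=\sup\{\int_{\mathcal T} f\,d(\mu-\nu): f\in\mathbb{L}_\alpha\}-\frac{b\lambda}{2}[\mu({\mathcal T})+\nu({\mathcal T})]$. A kernel $k:\mathcal X\times\mathcal X\to\mathbb{R}$ is negative definite if for all $n\ge2$, all $x_1,\dots,x_n\in\mathcal X$ and all $c_1,\dots,c_n\in\mathbb{R}$ with $\sum_i c_i=0$, one has $\sum_{i,j}c_ic_jk(x_i,x_j)\le0$. *)

theory Defs
  imports "HOL-Analysis.Analysis"
begin

text \<open>A finite rooted metric tree: node set V, root r, parent map par (the edge of a
non-root node v joins v to par v), edge lengths len (len v = length of the edge
above v).  Points of the tree: the root point (r,0), and for every non-root node v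
the points (v,t) with 0 < t \<le> len v on the edge above v (measured from par v);
the node v itself is the point (v, len v).  If len v = 0 the edge is the single
point (v,0).\<close>

definition is_rooted_tree :: "'v set \<Rightarrow> 'v \<Rightarrow> ('v \<Rightarrow> 'v) \<Rightarrow> ('v \<Rightarrow> real) \<Rightarrow> bool" where
  "is_rooted_tree V r par len \<longleftrightarrow> finite V \<and> r \<in> V \<and> (\<forall>v\<in>V - {r}. par v \<in> V)
     \<and> (\<forall>v\<in>V. \<exists>n. (par ^^ n) v = r) \<and> (\<forall>v\<in>V. 0 \<le> len v)"

definition tree_pts :: "'v set \<Rightarrow> 'v \<Rightarrow> ('v \<Rightarrow> real) \<Rightarrow> ('v \<times> real) set" where
  "tree_pts V r len = insert (r, 0)
     {(v, t). v \<in> V - {r} \<and> ((0 < t \<and> t \<le> len v) \<or> t = len v)}"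

definition path_nodes :: "'v \<Rightarrow> ('v \<Rightarrow> 'v) \<Rightarrow> 'v \<Rightarrow> 'v set" where
  "path_nodes r par v = {(par ^^ k) v | k. k < (LEAST n. (par ^^ n) v = r)}"

definition root_path :: "'v set \<Rightarrow> 'v \<Rightarrow> ('v \<Rightarrow> 'v) \<Rightarrow> ('v \<Rightarrow> real) \<Rightarrow> 'v \<times> real \<Rightarrow> ('v \<times> real) set" where
  "root_path V r par len x = insert (r, 0)
     ({y \<in> tree_pts V r len. fst y \<in> path_nodes r par (fst x) \<and> fst y \<noteq> fst x}
      \<union> {y \<in> tree_pts V r len. fst y = fst x \<and> fst x \<noteq> r \<and> snd y \<le> snd x})"

definition tree_space :: "'v set \<Rightarrow> 'v \<Rightarrow> ('v \<Rightarrow> real) \<Rightarrow> ('v \<times> real) measure" where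
  "tree_space V r len = restrict_space (count_space V \<Otimes>\<^sub>M borel) (tree_pts V r len)"

definition length_measure :: "'v set \<Rightarrow> 'v \<Rightarrow> ('v \<Rightarrow> real) \<Rightarrow> ('v \<times> real) measure" where
  "length_measure V r len = measure_of (tree_pts V r len) (sets (tree_space V r len))
     (\<lambda>A. \<Sum>v\<in>V - {r}. emeasure lborel {t \<in> {0<..len v}. (v, t) \<in> A})"

definition tree_measures :: "'v set \<Rightarrow> 'v \<Rightarrow> ('v \<Rightarrow> real) \<Rightarrow> ('v \<times> real) measure set" where
  "tree_measures V r len = {\<mu>. sets \<mu> = sets (tree_space V r len) \<and> finite_measure \<mu>}"

definition L_alpha :: "'v set \<Rightarrow> 'v \<Rightarrow> ('v \<Rightarrow> 'v) \<Rightarrow> ('v \<Rightarrow> real) \<Rightarrow> real \<Rightarrow> real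
    \<Rightarrow> ('v \<times> real \<Rightarrow> real) \<Rightarrow> ('v \<times> real \<Rightarrow> real) \<Rightarrow> real \<Rightarrow> ('v \<times> real \<Rightarrow> real) set" where
  "L_alpha V r par len b lam w1 w2 \<alpha> =
     {f. \<exists>s g. - w2 (r, 0) - b * lam / 2 + \<alpha> \<le> s \<and> s \<le> w1 (r, 0) + b * lam / 2 - \<alpha>
          \<and> g \<in> borel_measurable (tree_space V r len)
          \<and> (AE y in length_measure V r len. \<bar>g y\<bar> \<le> b)
          \<and> (\<forall>x\<in>tree_pts V r len.
               f x = s + (LINT y:root_path V r par len x|length_measure V r len. g y))}"

definition ET_tilde :: "'v set \<Rightarrow> 'v \<Rightarrow> ('v \<Rightarrow> 'v) \<Rightarrow> ('v \<Rightarrow> real) \<Rightarrow> real \<Rightarrow> real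
    \<Rightarrow> ('v \<times> real \<Rightarrow> real) \<Rightarrow> ('v \<times> real \<Rightarrow> real) \<Rightarrow> real
    \<Rightarrow> ('v \<times> real) measure \<Rightarrow> ('v \<times> real) measure \<Rightarrow> real" where
  "ET_tilde V r par len b lam w1 w2 \<alpha> \<mu> \<nu> =
     (SUP f\<in>L_alpha V r par len b lam w1 w2 \<alpha>. (\<integral>x. f x \<partial>\<mu>) - (\<integral>x. f x \<partial>\<nu>))
     - b * lam / 2 * (measure \<mu> (tree_pts V r len) + measure \<nu> (tree_pts V r len))"

definition neg_def_kernel :: "'a set \<Rightarrow> ('a \<Rightarrow> 'a \<Rightarrow> real) \<Rightarrow> bool" where
  "neg_def_kernel X k \<longleftrightarrow> (\<forall>n::nat. \<forall>x c. 2 \<le> n \<and> (\<forall>i<n. x i \<in> X) \<and> (\<Sum>i<n. c i) = (0::real)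
      \<longrightarrow> (\<Sum>i<n. \<Sum>j<n. c i * c j * k (x i) (x j)) \<le> 0)"

end

theory Submission
  imports Defs
begin

lemma tp_sub: "r \<in> V \<Longrightarrow> tree_pts V r len \<subseteq> V \<times> UNIV"
  unfolding tree_pts_def by auto

lemma space_M: "r \<in> V \<Longrightarrow> space (tree_space V r len) = tree_pts V r len"
  unfolding tree_space_def using tp_sub[of r V len]
  by (auto simp: space_restrict_space space_pair_measure)

lemma sets_om: assumes rV: "r \<in> V" shows "sets (length_measure V r len) = sets (tree_space V r len)"
proof -
  have "length_measure V r len = measure_of (space (tree_space V r len)) (sets (tree_space V r len))
     (\<lambda>A. \<Sum>v\<in>V - {r}. emeasure lborel {t \<in> {0<..len v}. (v, t) \<in> A})"
    unfolding length_measure_def space_M[OF rV] ..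
  also have "sets \<dots> = sets (tree_space V r len)"
    by (simp add: sets_measure_of[OF sets.space_closed] sets.sigma_sets_eq)
  finally show ?thesis .
qed

lemma space_om: "space (length_measure V r len) = tree_pts V r len"
  unfolding length_measure_def by (simp add: space_measure_of_conv)

lemma finite_om: assumes "finite V" shows "finite_measure (length_measure V r len)"
proof (rule finite_measureI)
  let ?f = "(\<lambda>A. \<Sum>v\<in>V - {r}. emeasure lborel {t \<in> {0<..len v}. (v, t) \<in> A})"
  have "emeasure (length_measure V r len) (space (length_measure V r len)) \<le> ?f (tree_pts V r len)"
    unfolding length_measure_def emeasure_measure_of_conv space_measure_of_conv by auto
  also have "\<dots> < \<infinity>"
  proof -
    have "\<forall>v\<in>V - {r}. emeasure lborel {t \<in> {0<..len v}. (v, t) \<in> tree_pts V r len} < \<infinity>"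
    proof
      fix v show "emeasure lborel {t \<in> {0<..len v}. (v, t) \<in> tree_pts V r len} < \<infinity>"
      proof (rule le_less_trans[OF emeasure_mono[of _ "{0<..len v}"]])
        show "emeasure lborel {0<..len v} < \<infinity>"
          by (cases "0 \<le> len v") auto
      qed auto
    qed
    then show ?thesis using assms by (simp add: ennreal_sum_less_top top_ennreal_def[symmetric])
  qed
  finally show "emeasure (length_measure V r len) (space (length_measure V r len)) \<noteq> \<infinity>" by simp
qed

lemma count_pred2:
  assumes "finite V" "h1 \<in> measurable N (count_space V)" "h2 \<in> measurable N (count_space V)"
  shows "{z \<in> space N. R (h1 z) (h2 z)} \<in> sets N"
proof -
  have m: "(\<lambda>z. (h1 z, h2 z)) \<in> measurable N (count_space (V \<times> V))"
    using assms measurable_Pair[OF assms(2,3)] pair_measure_countable[of V V]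
    by (simp add: countable_finite)
  have "{z \<in> space N. R (h1 z) (h2 z)} = (\<lambda>z. (h1 z, h2 z)) -` {p \<in> V \<times> V. R (fst p) (snd p)} \<inter> space N"
    using measurable_space[OF assms(2)] measurable_space[OF assms(3)] by auto
  also have "\<dots> \<in> sets N" using measurable_sets[OF m, of "{p \<in> V \<times> V. R (fst p) (snd p)}"] by simp
  finally show ?thesis .
qed

definition RK :: "'v set \<Rightarrow> 'v \<Rightarrow> ('v \<Rightarrow> 'v) \<Rightarrow> ('v \<Rightarrow> real) \<Rightarrow> (('v \<times> real) \<times> ('v \<times> real)) set" where
  "RK V r par len = {z \<in> tree_pts V r len \<times> tree_pts V r len. snd z \<in> root_path V r par len (fst z)}"

lemma fstM: "fst \<in> measurable (tree_space V r len) (count_space V)"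
  unfolding tree_space_def by (rule measurable_restrict_space1) simp

lemma sndM: "snd \<in> borel_measurable (tree_space V r len)"
  unfolding tree_space_def by (rule measurable_restrict_space1) simp

lemma RK_sets:
  assumes tree: "is_rooted_tree V r par len"
  shows "RK V r par len \<in> sets (tree_space V r len \<Otimes>\<^sub>M tree_space V r len)"
proof -
  let ?M = "tree_space V r len" let ?T = "tree_pts V r len"
  have rV: "r \<in> V" and fV: "finite V" using tree unfolding is_rooted_tree_def by auto
  have sp: "space (?M \<Otimes>\<^sub>M ?M) = ?T \<times> ?T" by (simp add: space_pair_measure space_M[OF rV])
  have f1: "(\<lambda>z. fst (fst z)) \<in> measurable (?M \<Otimes>\<^sub>M ?M) (count_space V)"
    by (rule measurable_compose[OF measurable_fst fstM])
  have f2: "(\<lambda>z. fst (snd z)) \<in> measurable (?M \<Otimes>\<^sub>M ?M) (count_space V)"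
    by (rule measurable_compose[OF measurable_snd fstM])
  have s1[measurable]: "(\<lambda>z. snd (fst z)) \<in> borel_measurable (?M \<Otimes>\<^sub>M ?M)"
    by (rule measurable_compose[OF measurable_fst sndM])
  have s2[measurable]: "(\<lambda>z. snd (snd z)) \<in> borel_measurable (?M \<Otimes>\<^sub>M ?M)"
    by (rule measurable_compose[OF measurable_snd sndM])
  let ?A = "{z \<in> space (?M \<Otimes>\<^sub>M ?M). fst (snd z) = r \<and> fst (snd z) = fst (snd z)}"
  let ?A2 = "{z \<in> space (?M \<Otimes>\<^sub>M ?M). snd (snd z) = 0}"
  let ?B = "{z \<in> space (?M \<Otimes>\<^sub>M ?M). (fst (snd z) \<in> path_nodes r par (fst (fst z)) \<and> fst (snd z) \<noteq> fst (fst z))}"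
  let ?C = "{z \<in> space (?M \<Otimes>\<^sub>M ?M). fst (fst z) = fst (snd z) \<and> fst (fst z) \<noteq> r}"
  let ?C2 = "{z \<in> space (?M \<Otimes>\<^sub>M ?M). snd (snd z) \<le> snd (fst z)}"
  have A: "?A \<in> sets (?M \<Otimes>\<^sub>M ?M)" by (rule count_pred2[OF fV f2 f2])
  have B: "?B \<in> sets (?M \<Otimes>\<^sub>M ?M)" by (rule count_pred2[OF fV f1 f2])
  have C: "?C \<in> sets (?M \<Otimes>\<^sub>M ?M)" by (rule count_pred2[OF fV f1 f2])
  have A2: "?A2 \<in> sets (?M \<Otimes>\<^sub>M ?M)" by measurable
  have C2: "?C2 \<in> sets (?M \<Otimes>\<^sub>M ?M)" by measurable
  have "RK V r par len = (?A \<inter> ?A2) \<union> ?B \<union> (?C \<inter> ?C2)"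
    unfolding RK_def sp root_path_def by auto
  with A A2 B C C2 show ?thesis by auto
qed

definition Hm :: "'v set \<Rightarrow> 'v \<Rightarrow> ('v \<Rightarrow> 'v) \<Rightarrow> ('v \<Rightarrow> real) \<Rightarrow> ('v \<times> real) measure \<Rightarrow> 'v \<times> real \<Rightarrow> real" where
  "Hm V r par len \<mu> y = (\<integral>x. indicator (RK V r par len) (x, y) \<partial>\<mu>)"

lemma key:
  assumes tree: "is_rooted_tree V r par len"
    and mu: "\<mu> \<in> tree_measures V r len"
    and g: "g \<in> borel_measurable (tree_space V r len)"
    and gB: "\<forall>y\<in>tree_pts V r len. \<bar>g y\<bar> \<le> B"
    and f: "\<forall>x\<in>tree_pts V r len. f x = s + (LINT y:root_path V r par len x|length_measure V r len. g y)"
  shows "(\<integral>x. f x \<partial>\<mu>) = s * measure \<mu> (tree_pts V r len)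
           + (\<integral>y. g y * Hm V r par len \<mu> y \<partial>length_measure V r len)"
proof -
  let ?M = "tree_space V r len" let ?T = "tree_pts V r len" let ?w = "length_measure V r len"
  let ?K = "RK V r par len"
  have rV: "r \<in> V" and fV: "finite V" using tree unfolding is_rooted_tree_def by auto
  have smu: "sets \<mu> = sets ?M" and fmu: "finite_measure \<mu>" using mu unfolding tree_measures_def by auto
  have spmu: "space \<mu> = ?T" using sets_eq_imp_space_eq[OF smu] space_M[OF rV] by simp
  interpret A: finite_measure \<mu> by (rule fmu)
  interpret B: finite_measure ?w by (rule finite_om[OF fV])
  interpret P: pair_sigma_finite \<mu> ?w
    by (rule pair_sigma_finite.intro[OF A.sigma_finite_measure_axioms B.sigma_finite_measure_axioms])
  have spw: "space ?w = ?T" by (rule space_om)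
  have sP: "sets (\<mu> \<Otimes>\<^sub>M ?w) = sets (?M \<Otimes>\<^sub>M ?M)"
    by (rule sets_pair_measure_cong[OF smu sets_om[OF rV]])
  have Ks: "?K \<in> sets (\<mu> \<Otimes>\<^sub>M ?w)" using RK_sets[OF tree] sP by simp
  have gw: "g \<in> borel_measurable ?w" by (subst measurable_cong_sets[OF sets_om[OF rV] refl]) (rule g)
  let ?k = "\<lambda>z. indicator ?K z * g (snd z)"
  have km: "?k \<in> borel_measurable (\<mu> \<Otimes>\<^sub>M ?w)"
    using Ks gw by measurable
  interpret C: finite_measure "\<mu> \<Otimes>\<^sub>M ?w" by (rule finite_measure_pair_measure[OF B.finite_measure_axioms A.finite_measure_axioms])
  have kint: "integrable (\<mu> \<Otimes>\<^sub>M ?w) ?k"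
  proof (rule C.integrable_const_bound[where B=B])
    show "AE x in \<mu> \<Otimes>\<^sub>M ?w. norm (?k x) \<le> B"
    proof (rule AE_I2)
      fix z assume "z \<in> space (\<mu> \<Otimes>\<^sub>M ?w)"
      then have "snd z \<in> ?T" by (auto simp: space_pair_measure spw)
      then have "\<bar>g (snd z)\<bar> \<le> B" using gB by auto
      then show "norm (?k z) \<le> B" by (auto simp: indicator_def)
    qed
  qed (rule km)
  have inner: "(LINT y:root_path V r par len x|?w. g y) = (\<integral>y. ?k (x, y) \<partial>?w)" if x: "x \<in> ?T" for x
    unfolding set_lebesgue_integral_def
    by (rule Bochner_Integration.integral_cong) (auto simp: spw RK_def x indicator_def)
  have "(\<integral>x. f x \<partial>\<mu>) = (\<integral>x. s + (\<integral>y. ?k (x, y) \<partial>?w) \<partial>\<mu>)"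
    by (rule Bochner_Integration.integral_cong) (auto simp: spmu f inner)
  also have "\<dots> = s * measure \<mu> ?T + (\<integral>x. (\<integral>y. ?k (x, y) \<partial>?w) \<partial>\<mu>)"
    using P.integrable_fst'[OF kint] by (simp add: spmu)
  also have "(\<integral>x. (\<integral>y. ?k (x, y) \<partial>?w) \<partial>\<mu>) = (\<integral>y. (\<integral>x. ?k (x, y) \<partial>\<mu>) \<partial>?w)"
  proof -
    have e: "(\<lambda>(x, y). indicator ?K (x, y) * g y) = ?k" by auto
    show ?thesis using P.Fubini_integral[of "\<lambda>x y. ?k (x, y)"] kint by (simp add: e)
  qed
  also have "\<dots> = (\<integral>y. g y * Hm V r par len \<mu> y \<partial>?w)"
    by (simp add: Hm_def mult.commute)
  finally show ?thesis .
qed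

lemma lin0:
  fixes c a e :: "nat \<Rightarrow> real"
  assumes "(\<Sum>i<n. c i) = 0"
  shows "(\<Sum>i<n. \<Sum>j<n. c i * c j * (a i + e j)) = 0"
proof -
  have e: "c i * c j * (a i + e j) = (c i * a i) * c j + c i * (c j * e j)" for i j
    by (simp add: algebra_simps)
  have "(\<Sum>i<n. \<Sum>j<n. c i * c j * (a i + e j))
      = (\<Sum>i<n. c i * a i * (\<Sum>j<n. c j)) + (\<Sum>i<n. c i * (\<Sum>j<n. c j * e j))"
    unfolding e sum.distrib sum_distrib_left ..
  also have "\<dots> = (\<Sum>i<n. c i * a i) * (\<Sum>j<n. c j) + (\<Sum>i<n. c i) * (\<Sum>j<n. c j * e j)"
    by (simp only: sum_distrib_right)
  also have "\<dots> = 0" using assms by simp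
  finally show ?thesis .
qed

lemma sq_form:
  fixes c e :: "nat \<Rightarrow> real"
  shows "(\<Sum>i<n. \<Sum>j<n. c i * c j * (e i * e j)) = (\<Sum>i<n. c i * e i)^2"
  by (simp add: power2_eq_square sum_distrib_left sum_distrib_right algebra_simps)

lemma bin_nd:
  fixes c e :: "nat \<Rightarrow> real"
  assumes "(\<Sum>i<n. c i) = 0" and e: "\<And>i. e i = 0 \<or> e i = 1"
  shows "(\<Sum>i<n. \<Sum>j<n. c i * c j * \<bar>e i - e j\<bar>) \<le> 0"
proof -
  have "\<bar>e i - e j\<bar> = (e i + e j) - 2 * (e i * e j)" for i j
    using e[of i] e[of j] by auto
  then have eq: "c i * c j * \<bar>e i - e j\<bar> = c i * c j * (e i + e j) - 2 * (c i * c j * (e i * e j))" for i j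
    by (metis (no_types, lifting) right_diff_distrib mult.left_commute)
  have "(\<Sum>i<n. \<Sum>j<n. c i * c j * \<bar>e i - e j\<bar>)
     = (\<Sum>i<n. \<Sum>j<n. c i * c j * (e i + e j)) - 2 * (\<Sum>i<n. \<Sum>j<n. c i * c j * (e i * e j))"
    unfolding eq by (simp only: sum_subtractf sum_distrib_left)
  also have "\<dots> = - 2 * (\<Sum>i<n. c i * e i)^2" using lin0[OF assms(1), of e e] sq_form[of c e n] by simp
  also have "\<dots> \<le> 0" by simp
  finally show ?thesis .
qed

lemma abs_int: "(\<integral>t. \<bar>indicator {..<a} t - indicator {..<b} t\<bar> \<partial>lborel) = \<bar>a - b :: real\<bar>"
proof -
  have "(\<lambda>t. \<bar>indicator {..<a} t - indicator {..<b} t\<bar>) = (indicator {min a b..<max a b} :: real \<Rightarrow> real)"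
    by (auto simp: indicator_def min_def max_def)
  then show ?thesis by (simp add: measure_lborel_Ico)
qed

lemma abs_int_integrable: "integrable lborel (\<lambda>t. \<bar>indicator {..<(a::real)} t - indicator {..<(b::real)} t\<bar> :: real)"
proof -
  have "(\<lambda>t. \<bar>indicator {..<a} t - indicator {..<b} t\<bar>) = (indicator {min a b..<max a b} :: real \<Rightarrow> real)"
    by (auto simp: indicator_def min_def max_def)
  then show ?thesis by (simp add: integrable_indicator_iff)
qed

lemma abs_nd:
  fixes c a :: "nat \<Rightarrow> real"
  assumes "(\<Sum>i<n. c i) = 0"
  shows "(\<Sum>i<n. \<Sum>j<n. c i * c j * \<bar>a i - a j\<bar>) \<le> 0"
proof -
  let ?e = "\<lambda>i t. indicator {..<a i} t :: real"
  have "(\<Sum>i<n. \<Sum>j<n. c i * c j * \<bar>a i - a j\<bar>)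
      = (\<Sum>i<n. \<Sum>j<n. c i * c j * (\<integral>t. \<bar>?e i t - ?e j t\<bar> \<partial>lborel))"
    by (simp add: abs_int)
  also have "\<dots> = (\<integral>t. (\<Sum>i<n. \<Sum>j<n. c i * c j * \<bar>?e i t - ?e j t\<bar>) \<partial>lborel)"
    by (simp add: abs_int_integrable integrable_sum integral_sum)
  also have "\<dots> \<le> (\<integral>(t::real). (0::real) \<partial>lborel)"
  proof (rule Bochner_Integration.integral_mono)
    show "integrable lborel (\<lambda>t. \<Sum>i<n. \<Sum>j<n. c i * c j * \<bar>?e i t - ?e j t\<bar>)"
      by (simp add: abs_int_integrable integrable_sum)
    fix t :: real
    show "(\<Sum>i<n. \<Sum>j<n. c i * c j * \<bar>?e i t - ?e j t\<bar>) \<le> 0"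
      by (rule bin_nd[OF assms]) (simp add: indicator_def)
  qed simp
  finally show ?thesis by simp
qed

lemma tm_facts:
  assumes tree: "is_rooted_tree V r par len" and mu: "\<mu> \<in> tree_measures V r len"
  shows "sets \<mu> = sets (tree_space V r len)" "finite_measure \<mu>" "space \<mu> = tree_pts V r len"
proof -
  have rV: "r \<in> V" using tree unfolding is_rooted_tree_def by auto
  show smu: "sets \<mu> = sets (tree_space V r len)" and "finite_measure \<mu>" using mu unfolding tree_measures_def by auto
  show "space \<mu> = tree_pts V r len" using sets_eq_imp_space_eq[OF smu] space_M[OF rV] by simp
qed

lemma Hm_meas:
  assumes tree: "is_rooted_tree V r par len" and mu: "\<mu> \<in> tree_measures V r len"
  shows "Hm V r par len \<mu> \<in> borel_measurable (tree_space V r len)"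
proof -
  let ?M = "tree_space V r len"
  interpret A: finite_measure \<mu> by (rule tm_facts(2)[OF tree mu])
  have sP: "sets (\<mu> \<Otimes>\<^sub>M ?M) = sets (?M \<Otimes>\<^sub>M ?M)"
    by (rule sets_pair_measure_cong[OF tm_facts(1)[OF tree mu] refl])
  have [measurable]: "RK V r par len \<in> sets (\<mu> \<Otimes>\<^sub>M ?M)" using RK_sets[OF tree] sP by simp
  have "(\<lambda>(y, x). indicator (RK V r par len) (x, y) :: real) \<in> borel_measurable (?M \<Otimes>\<^sub>M \<mu>)"
    by measurable
  from A.borel_measurable_lebesgue_integral[OF this]
  show ?thesis unfolding Hm_def[abs_def] by simp
qed

lemma Hm_bound:
  assumes tree: "is_rooted_tree V r par len" and mu: "\<mu> \<in> tree_measures V r len"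
  shows "0 \<le> Hm V r par len \<mu> y" "Hm V r par len \<mu> y \<le> measure \<mu> (tree_pts V r len)"
proof -
  interpret A: finite_measure \<mu> by (rule tm_facts(2)[OF tree mu])
  have e: "Hm V r par len \<mu> y = measure \<mu> ({x. (x, y) \<in> RK V r par len} \<inter> space \<mu>)"
  proof -
    have "(\<lambda>x. indicator (RK V r par len) (x, y) :: real) = indicator {x. (x, y) \<in> RK V r par len}"
      by (auto simp: indicator_def)
    then show ?thesis unfolding Hm_def by simp
  qed
  show "0 \<le> Hm V r par len \<mu> y" unfolding e by simp
  show "Hm V r par len \<mu> y \<le> measure \<mu> (tree_pts V r len)"
    unfolding e tm_facts(3)[OF tree mu, symmetric] by (rule A.bounded_measure)
qed

definition Phi where
  "Phi V r par len b lam w1 w2 \<alpha> \<mu> \<nu> =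
     (w1 (r, 0) + b * lam / 2 - \<alpha>) * max (measure \<mu> (tree_pts V r len) - measure \<nu> (tree_pts V r len)) 0
   + (w2 (r, 0) + b * lam / 2 - \<alpha>) * max (measure \<nu> (tree_pts V r len) - measure \<mu> (tree_pts V r len)) 0
   + b * (\<integral>y. \<bar>Hm V r par len \<mu> y - Hm V r par len \<nu> y\<bar> \<partial>length_measure V r len)"

lemma meas_w:
  "r \<in> V \<Longrightarrow> h \<in> borel_measurable (tree_space V r len) \<Longrightarrow> h \<in> borel_measurable (length_measure V r len)"
  by (subst measurable_cong_sets[OF sets_om refl]) simp_all

lemma intw:
  fixes h :: "'v \<times> real \<Rightarrow> real" and C :: real
  assumes tree: "is_rooted_tree V r par len" and h: "h \<in> borel_measurable (tree_space V r len)"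
    and hb: "\<forall>y\<in>tree_pts V r len. \<bar>h y\<bar> \<le> C"
  shows "integrable (length_measure V r len) h"
proof -
  have fV: "finite V" and rV: "r \<in> V" using tree unfolding is_rooted_tree_def by auto
  interpret B: finite_measure "length_measure V r len" by (rule finite_om[OF fV])
  show ?thesis
    by (rule B.integrable_const_bound[where B=C]) (use hb meas_w[OF rV h] in \<open>auto simp: space_om\<close>)
qed

lemma set_int_eq:
  fixes g :: "'v \<times> real \<Rightarrow> real"
  assumes tree: "is_rooted_tree V r par len" and x: "x \<in> tree_pts V r len"
  shows "(LINT y:root_path V r par len x|length_measure V r len. g y)
     = (\<integral>y. indicator (RK V r par len) (x, y) * g y \<partial>length_measure V r len)"
  unfolding set_lebesgue_integral_def
  by (rule Bochner_Integration.integral_cong) (auto simp: space_om RK_def x indicator_def)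

lemma sup_eq:
  fixes V :: "'v set"
  assumes tree: "is_rooted_tree V r par len" and b: "0 \<le> b"
    and mu: "\<mu> \<in> tree_measures V r len" and nu: "\<nu> \<in> tree_measures V r len"
    and ha: "- w2 (r, 0) - b * lam / 2 + \<alpha> \<le> w1 (r, 0) + b * lam / 2 - \<alpha>"
  shows "(SUP f\<in>L_alpha V r par len b lam w1 w2 \<alpha>. (\<integral>x. f x \<partial>\<mu>) - (\<integral>x. f x \<partial>\<nu>))
         = Phi V r par len b lam w1 w2 \<alpha> \<mu> \<nu>"
proof -
  let ?M = "tree_space V r len" let ?T = "tree_pts V r len" let ?w = "length_measure V r len"
  let ?K = "RK V r par len"
  have rV: "r \<in> V" using tree unfolding is_rooted_tree_def by auto
  define A1 where "A1 = w1 (r, 0) + b * lam / 2 - \<alpha>"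
  define A2 where "A2 = w2 (r, 0) + b * lam / 2 - \<alpha>"
  define D where "D = measure \<mu> ?T - measure \<nu> ?T"
  define h where "h = (\<lambda>y. Hm V r par len \<mu> y - Hm V r par len \<nu> y)"
  define I where "I = (\<lambda>f :: 'v \<times> real \<Rightarrow> real. (\<integral>x. f x \<partial>\<mu>) - (\<integral>x. f x \<partial>\<nu>))"
  have PhiE: "Phi V r par len b lam w1 w2 \<alpha> \<mu> \<nu> = A1 * max D 0 + A2 * max (- D) 0 + b * (\<integral>y. \<bar>h y\<bar> \<partial>?w)"
    unfolding Phi_def A1_def A2_def D_def h_def by simp
  have hm: "h \<in> borel_measurable ?M" unfolding h_def using Hm_meas[OF tree mu] Hm_meas[OF tree nu] by measurable
  have hb: "\<forall>y\<in>?T. \<bar>h y\<bar> \<le> measure \<mu> ?T + measure \<nu> ?T"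
    unfolding h_def using Hm_bound[OF tree mu] Hm_bound[OF tree nu] by (auto simp: abs_le_iff) (smt (verit))+
  have Kp: "(\<lambda>y. indicator ?K (x, y) * g y :: real) \<in> borel_measurable ?w"
    if "g \<in> borel_measurable ?M" for x g
  proof -
    have "Pair x -` ?K \<in> sets ?M" by (rule sets_Pair1[OF RK_sets[OF tree]])
    then have "Pair x -` ?K \<in> sets ?w" by (simp add: sets_om[OF rV])
    then have "(indicator (Pair x -` ?K) :: _ \<Rightarrow> real) \<in> borel_measurable ?w" by simp
    moreover have "\<And>y. (indicator ?K (x, y) :: real) = indicator (Pair x -` ?K) y" by (auto simp: indicator_def)
    ultimately show ?thesis using meas_w[OF rV that] by simp
  qed
  have form: "I f = s * D + (\<integral>y. g y * h y \<partial>?w)"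
    if gm: "g \<in> borel_measurable ?M" and gB: "\<forall>y\<in>?T. \<bar>g y\<bar> \<le> b"
      and fx: "\<forall>x\<in>?T. f x = s + (LINT y:root_path V r par len x|?w. g y)" for f g s
  proof -
    have i1: "integrable ?w (\<lambda>y. g y * Hm V r par len \<mu> y)"
      by (rule intw[OF tree, where C="b * measure \<mu> ?T"])
         (use gm Hm_meas[OF tree mu] in measurable,
          use gB Hm_bound[OF tree mu] in \<open>auto simp: abs_mult intro!: mult_mono\<close>)
    have i2: "integrable ?w (\<lambda>y. g y * Hm V r par len \<nu> y)"
      by (rule intw[OF tree, where C="b * measure \<nu> ?T"])
         (use gm Hm_meas[OF tree nu] in measurable,
          use gB Hm_bound[OF tree nu] in \<open>auto simp: abs_mult intro!: mult_mono\<close>)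
    show ?thesis
      unfolding I_def key[OF tree mu gm gB fx] key[OF tree nu gm gB fx] D_def h_def
      using Bochner_Integration.integral_diff[OF i1 i2]
      by (simp add: algebra_simps)
  qed
  have ub: "I f \<le> Phi V r par len b lam w1 w2 \<alpha> \<mu> \<nu>" if f: "f \<in> L_alpha V r par len b lam w1 w2 \<alpha>" for f
  proof -
    obtain s g where s1: "- w2 (r, 0) - b * lam / 2 + \<alpha> \<le> s" and s2: "s \<le> w1 (r, 0) + b * lam / 2 - \<alpha>"
      and gm: "g \<in> borel_measurable ?M" and gae: "AE y in ?w. \<bar>g y\<bar> \<le> b"
      and fx: "\<forall>x\<in>?T. f x = s + (LINT y:root_path V r par len x|?w. g y)"
      using f unfolding L_alpha_def by blast
    define gt where "gt = (\<lambda>y. max (- b) (min b (g y)))"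
    have gtm: "gt \<in> borel_measurable ?M" unfolding gt_def using gm by measurable
    have gtB: "\<forall>y\<in>?T. \<bar>gt y\<bar> \<le> b" unfolding gt_def using b by auto
    have fx': "\<forall>x\<in>?T. f x = s + (LINT y:root_path V r par len x|?w. gt y)"
    proof
      fix x assume x: "x \<in> ?T"
      have "(\<integral>y. indicator ?K (x, y) * g y \<partial>?w) = (\<integral>y. indicator ?K (x, y) * gt y \<partial>?w)"
        by (rule integral_cong_AE[OF Kp[OF gm] Kp[OF gtm]]) (use gae in \<open>auto simp: gt_def\<close>)
      then show "f x = s + (LINT y:root_path V r par len x|?w. gt y)"
        using fx x by (simp add: set_int_eq[OF tree x])
    qed
    have "I f = s * D + (\<integral>y. gt y * h y \<partial>?w)" by (rule form[OF gtm gtB fx'])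
    also have "(\<integral>y. gt y * h y \<partial>?w) \<le> (\<integral>y. b * \<bar>h y\<bar> \<partial>?w)"
    proof (rule Bochner_Integration.integral_mono)
      show "integrable ?w (\<lambda>y. gt y * h y)"
        by (rule intw[OF tree, where C="b * (measure \<mu> ?T + measure \<nu> ?T)"])
           (use gtm hm in measurable, use gtB hb in \<open>auto simp: abs_mult intro!: mult_mono\<close>)
      show "integrable ?w (\<lambda>y. b * \<bar>h y\<bar>)"
        by (rule intw[OF tree, where C="b * (measure \<mu> ?T + measure \<nu> ?T)"])
           (use hm in measurable, use b hb in \<open>auto simp: abs_mult intro!: mult_mono\<close>)
      fix y assume "y \<in> space ?w"
      then have "\<bar>gt y\<bar> \<le> b" using gtB by (simp add: space_om)
      then have "\<bar>gt y * h y\<bar> \<le> b * \<bar>h y\<bar>" by (simp add: abs_mult mult_right_mono)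
      then show "gt y * h y \<le> b * \<bar>h y\<bar>" by simp
    qed
    also have "s * D \<le> A1 * max D 0 + A2 * max (- D) 0"
    proof (cases "0 \<le> D")
      case True
      then have "s * D \<le> A1 * D" using s2 unfolding A1_def by (simp add: mult_right_mono)
      then show ?thesis using True by simp
    next
      case False
      then have "s * D \<le> (- A2) * D" using s1 unfolding A2_def by (simp add: mult_right_mono_neg)
      then show ?thesis using False by simp
    qed
    finally show ?thesis unfolding PhiE by simp
  qed
  define s0 where "s0 = (if 0 \<le> D then A1 else - A2)"
  define g0 where "g0 = (\<lambda>y. b * sgn (h y))"
  define f0 where "f0 = (\<lambda>x. s0 + (LINT y:root_path V r par len x|?w. g0 y))"
  have g0m: "g0 \<in> borel_measurable ?M" unfolding g0_def using hm by measurable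
  have g0B: "\<forall>y\<in>?T. \<bar>g0 y\<bar> \<le> b" unfolding g0_def using b by (auto simp: abs_mult abs_sgn_eq)
  have f0L: "f0 \<in> L_alpha V r par len b lam w1 w2 \<alpha>"
    unfolding L_alpha_def
  proof (intro CollectI exI conjI)
    show "- w2 (r, 0) - b * lam / 2 + \<alpha> \<le> s0" "s0 \<le> w1 (r, 0) + b * lam / 2 - \<alpha>"
      using ha unfolding s0_def A1_def A2_def by auto
    show "g0 \<in> borel_measurable ?M" by (rule g0m)
    show "AE y in ?w. \<bar>g0 y\<bar> \<le> b" using g0B by (intro AE_I2) (simp add: space_om)
    show "\<forall>x\<in>?T. f0 x = s0 + (LINT y:root_path V r par len x|?w. g0 y)" by (simp add: f0_def)
  qed
  have "I f0 = s0 * D + (\<integral>y. g0 y * h y \<partial>?w)" by (rule form[OF g0m g0B]) (simp add: f0_def)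
  also have "(\<lambda>y. g0 y * h y) = (\<lambda>y. b * \<bar>h y\<bar>)"
    unfolding g0_def by (auto simp: sgn_if)
  also have "s0 * D = A1 * max D 0 + A2 * max (- D) 0" unfolding s0_def by auto
  finally have v0: "I f0 = Phi V r par len b lam w1 w2 \<alpha> \<mu> \<nu>" unfolding PhiE by simp
  show ?thesis
    unfolding I_def[symmetric]
  proof (rule cSup_eq_maximum)
    show "Phi V r par len b lam w1 w2 \<alpha> \<mu> \<nu> \<in> I ` L_alpha V r par len b lam w1 w2 \<alpha>"
      using f0L v0 by (metis image_eqI)
  qed (use ub in auto)
qed

lemma J_nd:
  fixes V :: "'v set" and x :: "nat \<Rightarrow> ('v \<times> real) measure" and c :: "nat \<Rightarrow> real"
  assumes tree: "is_rooted_tree V r par len" and X: "\<forall>i<n. x i \<in> tree_measures V r len"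
    and c: "(\<Sum>i<n. c i) = 0"
  shows "(\<Sum>i<n. \<Sum>j<n. c i * c j * (\<integral>y. \<bar>Hm V r par len (x i) y - Hm V r par len (x j) y\<bar> \<partial>length_measure V r len)) \<le> 0"
proof -
  let ?w = "length_measure V r len" let ?T = "tree_pts V r len"
  let ?F = "\<lambda>i j y. \<bar>Hm V r par len (x i) y - Hm V r par len (x j) y\<bar>"
  have int: "integrable ?w (?F i j)" if "i < n" "j < n" for i j
  proof (rule intw[OF tree, where C="measure (x i) ?T + measure (x j) ?T"])
    have xi: "x i \<in> tree_measures V r len" and xj: "x j \<in> tree_measures V r len" using X that by auto
    have [measurable]: "Hm V r par len (x i) \<in> borel_measurable (tree_space V r len)"
      by (rule Hm_meas[OF tree xi])
    have [measurable]: "Hm V r par len (x j) \<in> borel_measurable (tree_space V r len)"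
      by (rule Hm_meas[OF tree xj])
    show "?F i j \<in> borel_measurable (tree_space V r len)"
      by measurable
    show "\<forall>y\<in>?T. \<bar>?F i j y\<bar> \<le> measure (x i) ?T + measure (x j) ?T"
      using Hm_bound[OF tree xi] Hm_bound[OF tree xj]
      by (auto simp: abs_le_iff) (smt (verit))+
  qed
  have "(\<Sum>i<n. \<Sum>j<n. c i * c j * (\<integral>y. ?F i j y \<partial>?w)) = (\<Sum>i<n. \<Sum>j<n. (\<integral>y. c i * c j * ?F i j y \<partial>?w))"
    by simp
  also have "\<dots> = (\<Sum>i<n. (\<integral>y. (\<Sum>j<n. c i * c j * ?F i j y) \<partial>?w))"
    by (intro sum.cong refl, rule Bochner_Integration.integral_sum[symmetric]) (auto intro!: int integrable_mult_right)
  also have "\<dots> = (\<integral>y. (\<Sum>i<n. \<Sum>j<n. c i * c j * ?F i j y) \<partial>?w)"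
    by (rule Bochner_Integration.integral_sum[symmetric]) (auto intro!: int integrable_sum integrable_mult_right)
  also have "\<dots> \<le> (\<integral>y. (0::real) \<partial>?w)"
  proof (rule Bochner_Integration.integral_mono)
    show "integrable ?w (\<lambda>y. \<Sum>i<n. \<Sum>j<n. c i * c j * ?F i j y)"
      by (auto intro!: int integrable_sum integrable_mult_right)
    fix y show "(\<Sum>i<n. \<Sum>j<n. c i * c j * ?F i j y) \<le> 0"
      by (rule abs_nd[OF c])
  qed simp
  finally show ?thesis by simp
qed

lemma partA:
  fixes V :: "'v set"
  assumes tree: "is_rooted_tree V r par len" and b: "0 \<le> b"
    and a: "\<alpha> \<le> (b * lam + w1 (r, 0) + w2 (r, 0)) / 2"
  shows "neg_def_kernel (tree_measures V r len) (ET_tilde V r par len b lam w1 w2 \<alpha>)"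
  unfolding neg_def_kernel_def
proof (intro allI impI, elim conjE)
  fix n :: nat and x :: "nat \<Rightarrow> ('v \<times> real) measure" and c :: "nat \<Rightarrow> real"
  assume X: "\<forall>i<n. x i \<in> tree_measures V r len" and c: "(\<Sum>i<n. c i) = 0"
  let ?T = "tree_pts V r len" let ?w = "length_measure V r len"
  define A1 where "A1 = w1 (r, 0) + b * lam / 2 - \<alpha>"
  define A2 where "A2 = w2 (r, 0) + b * lam / 2 - \<alpha>"
  define m where "m = (\<lambda>i. measure (x i) ?T)"
  define J where "J = (\<lambda>i j. \<integral>y. \<bar>Hm V r par len (x i) y - Hm V r par len (x j) y\<bar> \<partial>?w)"
  define a' where "a' = (\<lambda>i. ((A1 - A2) / 2 - b * lam / 2) * m i)"
  define e' where "e' = (\<lambda>j. (- (A1 - A2) / 2 - b * lam / 2) * m j)"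
  have ha: "- w2 (r, 0) - b * lam / 2 + \<alpha> \<le> w1 (r, 0) + b * lam / 2 - \<alpha>" using a by simp
  have A12: "0 \<le> A1 + A2" using a unfolding A1_def A2_def by simp
  have eq: "c i * c j * ET_tilde V r par len b lam w1 w2 \<alpha> (x i) (x j)
      = (A1 + A2) / 2 * (c i * c j * \<bar>m i - m j\<bar>) + c i * c j * (a' i + e' j) + b * (c i * c j * J i j)"
    if "i < n" "j < n" for i j
  proof -
    have xi: "x i \<in> tree_measures V r len" and xj: "x j \<in> tree_measures V r len" using X that by auto
    have "ET_tilde V r par len b lam w1 w2 \<alpha> (x i) (x j)
        = A1 * max (m i - m j) 0 + A2 * max (m j - m i) 0 + b * J i j - b * lam / 2 * (m i + m j)"
      unfolding ET_tilde_def sup_eq[of V r par len b "x i" "x j" w2 lam \<alpha> w1, OF tree b xi xj ha]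
      unfolding Phi_def A1_def A2_def m_def J_def by simp
    also have "\<dots> = (A1 + A2) / 2 * \<bar>m i - m j\<bar> + (a' i + e' j) + b * J i j"
      unfolding a'_def e'_def by (cases "m j \<le> m i") (simp_all add: max_def abs_if field_simps)
    finally show ?thesis by (simp add: algebra_simps)
  qed
  have "(\<Sum>i<n. \<Sum>j<n. c i * c j * ET_tilde V r par len b lam w1 w2 \<alpha> (x i) (x j))
     = (\<Sum>i<n. \<Sum>j<n. (A1 + A2) / 2 * (c i * c j * \<bar>m i - m j\<bar>) + c i * c j * (a' i + e' j) + b * (c i * c j * J i j))"
    by (intro sum.cong refl) (simp add: eq)
  also have "\<dots> = (A1 + A2) / 2 * (\<Sum>i<n. \<Sum>j<n. c i * c j * \<bar>m i - m j\<bar>)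
      + (\<Sum>i<n. \<Sum>j<n. c i * c j * (a' i + e' j)) + b * (\<Sum>i<n. \<Sum>j<n. c i * c j * J i j)"
    by (simp add: sum.distrib sum_distrib_left)
  also have "\<dots> \<le> 0"
  proof -
    have "(A1 + A2) / 2 * (\<Sum>i<n. \<Sum>j<n. c i * c j * \<bar>m i - m j\<bar>) \<le> 0"
      using abs_nd[OF c, of m] A12 by (simp add: mult_nonneg_nonpos)
    moreover have "(\<Sum>i<n. \<Sum>j<n. c i * c j * (a' i + e' j)) = 0" by (rule lin0[OF c])
    moreover have "b * (\<Sum>i<n. \<Sum>j<n. c i * c j * J i j) \<le> 0"
      using J_nd[OF tree X c] b unfolding J_def by (simp add: mult_nonneg_nonpos)
    ultimately show ?thesis by simp
  qed
  finally show "(\<Sum>i<n. \<Sum>j<n. c i * c j * ET_tilde V r par len b lam w1 w2 \<alpha> (x i) (x j)) \<le> 0" .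
qed

theorem proposition3p11:
  fixes V :: "'v set" and r :: 'v and par :: "'v \<Rightarrow> 'v" and len :: "'v \<Rightarrow> real"
    and b lam :: real and w1 w2 :: "'v \<times> real \<Rightarrow> real"
  assumes tree: "is_rooted_tree V r par len"
    and b: "0 \<le> b"
    and w1: "\<forall>x\<in>tree_pts V r len. 0 \<le> w1 x"
    and w2: "\<forall>x\<in>tree_pts V r len. 0 \<le> w2 x"
    and lam: "0 \<le> lam"
  shows "(\<forall>\<alpha>. 0 \<le> \<alpha> \<and> \<alpha> \<le> (b * lam + w1 (r, 0) + w2 (r, 0)) / 2 \<longrightarrow>
            neg_def_kernel (tree_measures V r len) (ET_tilde V r par len b lam w1 w2 \<alpha>))
       \<and> (\<forall>\<alpha>. 0 \<le> \<alpha> \<and> \<alpha> < b * lam / 2 + min (w1 (r, 0)) (w2 (r, 0)) \<longrightarrow>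
            neg_def_kernel (tree_measures V r len)
              (\<lambda>\<mu> \<nu>. ET_tilde V r par len b lam w1 w2 \<alpha> \<mu> \<nu>
                 + b * lam / 2 * (measure \<mu> (tree_pts V r len) + measure \<nu> (tree_pts V r len))))"
proof (intro conjI allI impI)
  fix \<alpha> :: real
  assume "0 \<le> \<alpha> \<and> \<alpha> \<le> (b * lam + w1 (r, 0) + w2 (r, 0)) / 2"
  then show "neg_def_kernel (tree_measures V r len) (ET_tilde V r par len b lam w1 w2 \<alpha>)"
    using partA[OF tree b] by blast
next
  fix \<alpha> :: real
  assume h: "0 \<le> \<alpha> \<and> \<alpha> < b * lam / 2 + min (w1 (r, 0)) (w2 (r, 0))"
  then have "\<alpha> \<le> (b * lam + w1 (r, 0) + w2 (r, 0)) / 2" by (simp add: min_def split: if_splits)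
  then have A: "neg_def_kernel (tree_measures V r len) (ET_tilde V r par len b lam w1 w2 \<alpha>)"
    using partA[OF tree b] by blast
  show "neg_def_kernel (tree_measures V r len)
              (\<lambda>\<mu> \<nu>. ET_tilde V r par len b lam w1 w2 \<alpha> \<mu> \<nu>
                 + b * lam / 2 * (measure \<mu> (tree_pts V r len) + measure \<nu> (tree_pts V r len)))"
    unfolding neg_def_kernel_def
  proof (intro allI impI)
    fix n :: nat and x :: "nat \<Rightarrow> ('v \<times> real) measure" and c :: "nat \<Rightarrow> real"
    assume H: "2 \<le> n \<and> (\<forall>i<n. x i \<in> tree_measures V r len) \<and> sum c {..<n} = 0"
    let ?m = "\<lambda>i. measure (x i) (tree_pts V r len)"
    have "(\<Sum>i<n. \<Sum>j<n. c i * c j * (ET_tilde V r par len b lam w1 w2 \<alpha> (x i) (x j)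
                 + b * lam / 2 * (?m i + ?m j)))
        = (\<Sum>i<n. \<Sum>j<n. c i * c j * ET_tilde V r par len b lam w1 w2 \<alpha> (x i) (x j))
          + (\<Sum>i<n. \<Sum>j<n. c i * c j * (b * lam / 2 * ?m i + b * lam / 2 * ?m j))"
      by (simp add: algebra_simps sum.distrib)
    also have "(\<Sum>i<n. \<Sum>j<n. c i * c j * (b * lam / 2 * ?m i + b * lam / 2 * ?m j)) = 0"
      by (rule lin0) (use H in auto)
    also have "(\<Sum>i<n. \<Sum>j<n. c i * c j * ET_tilde V r par len b lam w1 w2 \<alpha> (x i) (x j)) \<le> 0"
      using A H unfolding neg_def_kernel_def by blast
    finally show "(\<Sum>i<n. \<Sum>j<n. c i * c j * (ET_tilde V r par len b lam w1 w2 \<alpha> (x i) (x j)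
                 + b * lam / 2 * (?m i + ?m j))) \<le> 0" by simp
  qed
qed

end
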